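(* Let $m\ge 2$, let $f(t)=t^m-\sum_{s=0}^{m-1}u_{m-s}t^s$ with $u_1,\dots,u_m\in\mathbb{Q}$ have $m$ distinct nonzero roots $\alpha_1,\dots,\alpha_m$, let $\mathbf{x}=(x_0,\dots,x_{m-1})\in\mathbb{Q}^m$ and $M=\sum_{n=0}^{m-1}x_nA^n$ with $A$ the companion matrix of $f$. Then for every $n\ge1$ for which the denominators are nonzero, $$\frac{M^n_{m,m-1}}{M^n_{1,m}}=\frac{M^n_{m,1}}{M^n_{1,2}}=\frac{1}{(-1)^{m-1}\prod_{h=1}^m\alpha_h};$$ in particular these ratios do not depend on $n$.
   Context: The companion matrix $A=(A_{a,b})$ of $f(t)=t^m-\sum_{s=0}^{m-1}u_{m-s}t^s$ is the $m\times m$ matrix with $A_{a+1,a}=1$ for $a=1,\dots,m-1$, last column $(A_{1,m},\dots,A_{m,m})^T=(u_m,u_{m-1},\dots,u_1)^T$, and all other entries $0$. $M^n_{a,b}$ denotes the $(a,b)$-entry of the $n$-th power of $M$. *)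

theory Defs
  imports "Jordan_Normal_Form.Matrix"
begin

text \<open>Companion matrix of f(t) = t^m - (sum over s<m of u_(m-s) t^s), as an m x m
  matrix with 0-based indices: entry (i,j) is the paper's entry (i+1,j+1).\<close>
definition companion :: "nat \<Rightarrow> (nat \<Rightarrow> 'a::comm_ring_1) \<Rightarrow> 'a mat" where
  "companion m u = mat m m (\<lambda>(i,j). if j = m - 1 then u (m - i)
                                     else if i = j + 1 then 1 else 0)"

definition mat_poly_sum :: "nat \<Rightarrow> (nat \<Rightarrow> 'a::comm_ring_1) \<Rightarrow> 'a mat \<Rightarrow> 'a mat" where
  "mat_poly_sum m x A = mat m m (\<lambda>ij. \<Sum>k<m. x k * (A ^\<^sub>m k) $$ ij)"

end

theory Submission
  imports Defs "HOL-Computational_Algebra.Polynomial"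
begin

lemma roots_prod:
  fixes m :: nat and c :: "nat \<Rightarrow> complex" and \<alpha> :: "nat \<Rightarrow> complex"
  assumes m2: "m \<ge> 2"
    and roots: "\<And>h. h \<in> {1..m} \<Longrightarrow> (\<alpha> h) ^ m - (\<Sum>s<m. c s * (\<alpha> h) ^ s) = 0"
    and distinct: "inj_on \<alpha> {1..m}"
  shows "c 0 = (-1) ^ (m - 1) * (\<Prod>h=1..m. \<alpha> h)"
proof -
  define p where "p = monom 1 m - (\<Sum>s<m. monom (c s) s)"
  define q where "q = (\<Prod>h=1..m. [:-\<alpha> h, 1:])"
  have dq: "degree q = m" unfolding q_def
    by (subst degree_prod_eq_sum_degree) auto
  have lq: "lead_coeff q = 1" unfolding q_def
    by (simp add: lead_coeff_prod)
  have dsum: "degree (\<Sum>s<m. monom (c s) s) < m"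
    using m2 by (intro degree_lessI) (auto simp: coeff_sum)
  have dp: "degree p \<le> m" unfolding p_def
    using dsum by (intro degree_diff_le) (auto simp: degree_monom_le)
  have cp: "coeff p m = 1" unfolding p_def
    by (auto simp: coeff_sum coeff_monom)
  have "p = q"
  proof (rule poly_eqI_degree_lead_coeff[where n = m and A = "\<alpha> ` {1..m}"])
    show "coeff p m = coeff q m" using cp lq dq by simp
    show "m \<le> card (\<alpha> ` {1..m})" using card_image[OF distinct] by simp
    show "degree p \<le> m" by fact
    show "degree q \<le> m" using dq by simp
    fix z assume "z \<in> \<alpha> ` {1..m}"
    then obtain h where h: "h \<in> {1..m}" "z = \<alpha> h" by auto
    have "poly p z = 0" using roots[OF h(1)] h(2)
      by (simp add: p_def poly_sum poly_monom)
    moreover have "poly q z = 0" using h unfolding q_def poly_prod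
      by (intro prod_zero) auto
    ultimately show "poly p z = poly q z" by simp
  qed
  hence "poly p 0 = poly q 0" by simp
  moreover have "poly p 0 = - c 0" using m2
    by (simp add: p_def poly_sum poly_monom zero_power sum.If_cases lessThan_def)
  moreover have "poly q 0 = (-1) ^ m * (\<Prod>h=1..m. \<alpha> h)"
  proof -
    have "poly q 0 = (\<Prod>h=1..m. (-1) * \<alpha> h)" by (simp add: q_def poly_prod)
    also have "\<dots> = (\<Prod>h=1..m. (-1::complex)) * (\<Prod>h=1..m. \<alpha> h)" by (rule prod.distrib)
    finally show ?thesis by simp
  qed
  ultimately have "c 0 = - ((-1) ^ m * (\<Prod>h=1..m. \<alpha> h))" by (metis minus_minus)
  also have "\<dots> = (-1) ^ (m - 1) * (\<Prod>h=1..m. \<alpha> h)"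
    using m2 by (cases m) auto
  finally show ?thesis .
qed

lemma companion_carrier: "companion m u \<in> carrier_mat m m"
  unfolding companion_def by simp

lemma pow_comm:
  fixes A :: "'a::comm_ring_1 mat"
  assumes A: "A \<in> carrier_mat m m"
  shows "A ^\<^sub>m k * A = A * A ^\<^sub>m k"
proof (induction k)
  case 0 then show ?case using A by simp
next
  case (Suc k)
  have "A * A ^\<^sub>m Suc k = (A * A ^\<^sub>m k) * A"
    using A by (simp add: assoc_mult_mat[of _ m m _ m _ m])
  also have "\<dots> = A ^\<^sub>m Suc k * A" using Suc by simp
  finally show ?case by simp
qed

lemma comm_pow:
  fixes A B :: "'a::comm_ring_1 mat"
  assumes A: "A \<in> carrier_mat m m" and B: "B \<in> carrier_mat m m" and c: "B * A = A * B"
  shows "B ^\<^sub>m k * A = A * B ^\<^sub>m k"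
proof (induction k)
  case 0 then show ?case using A B by simp
next
  case (Suc k)
  have Bk: "B ^\<^sub>m k \<in> carrier_mat m m" using B by simp
  have "B ^\<^sub>m Suc k * A = B ^\<^sub>m k * (B * A)"
    using A B Bk by (simp add: assoc_mult_mat[of _ m m _ m _ m])
  also have "\<dots> = (B ^\<^sub>m k * A) * B"
    using A B Bk by (simp add: c assoc_mult_mat[of _ m m _ m _ m])
  also have "\<dots> = A * B ^\<^sub>m Suc k"
    using A B Bk by (simp add: Suc assoc_mult_mat[of _ m m _ m _ m])
  finally show ?case .
qed

lemma poly_sum_comm:
  fixes A :: "'a::comm_ring_1 mat"
  assumes A: "A \<in> carrier_mat m m"
  shows "mat_poly_sum m x A * A = A * mat_poly_sum m x A"
proof (rule eq_matI)
  fix i j assume i: "i < dim_row (A * mat_poly_sum m x A)" and j: "j < dim_col (A * mat_poly_sum m x A)"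
  have im: "i < m" and jm: "j < m" using i j A by (auto simp: mat_poly_sum_def)
  have Ak: "\<And>k. A ^\<^sub>m k \<in> carrier_mat m m" using A by simp
  have "(mat_poly_sum m x A * A) $$ (i, j) = (\<Sum>l<m. (\<Sum>k<m. x k * (A ^\<^sub>m k) $$ (i,l)) * A $$ (l,j))"
    using im jm A by (simp add: mat_poly_sum_def scalar_prod_def lessThan_atLeast0)
  also have "\<dots> = (\<Sum>l<m. \<Sum>k<m. x k * (A ^\<^sub>m k) $$ (i,l) * A $$ (l,j))"
    by (simp add: sum_distrib_right)
  also have "\<dots> = (\<Sum>k<m. \<Sum>l<m. x k * (A ^\<^sub>m k) $$ (i,l) * A $$ (l,j))"
    by (rule sum.swap)
  also have "\<dots> = (\<Sum>k<m. x k * (\<Sum>l<m. (A ^\<^sub>m k) $$ (i,l) * A $$ (l,j)))"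
    by (simp add: sum_distrib_left mult.assoc)
  also have "\<dots> = (\<Sum>k<m. x k * (A ^\<^sub>m k * A) $$ (i,j))"
    using im jm A Ak by (simp add: scalar_prod_def lessThan_atLeast0)
  also have "\<dots> = (\<Sum>k<m. x k * (A * A ^\<^sub>m k) $$ (i,j))"
    using pow_comm[OF A] by simp
  also have "\<dots> = (\<Sum>k<m. x k * (\<Sum>l<m. A $$ (i,l) * (A ^\<^sub>m k) $$ (l,j)))"
    using im jm A Ak by (simp add: scalar_prod_def lessThan_atLeast0)
  also have "\<dots> = (\<Sum>k<m. \<Sum>l<m. A $$ (i,l) * (x k * (A ^\<^sub>m k) $$ (l,j)))"
    by (simp add: sum_distrib_left mult.left_commute)
  also have "\<dots> = (\<Sum>l<m. \<Sum>k<m. A $$ (i,l) * (x k * (A ^\<^sub>m k) $$ (l,j)))"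
    by (rule sum.swap)
  also have "\<dots> = (\<Sum>l<m. A $$ (i,l) * (\<Sum>k<m. x k * (A ^\<^sub>m k) $$ (l,j)))"
    by (simp add: sum_distrib_left)
  also have "\<dots> = (A * mat_poly_sum m x A) $$ (i, j)"
    using im jm A by (simp add: mat_poly_sum_def scalar_prod_def lessThan_atLeast0)
  finally show "(mat_poly_sum m x A * A) $$ (i, j) = (A * mat_poly_sum m x A) $$ (i, j)" .
qed (use A in \<open>auto simp: mat_poly_sum_def\<close>)

lemma entry_rel:
  fixes P :: "'a::comm_ring_1 mat"
  assumes P: "P \<in> carrier_mat m m" and c: "P * companion m u = companion m u * P"
    and j: "j + 1 < m"
  shows "P $$ (0, j+1) = u m * P $$ (m-1, j)"
proof -
  let ?A = "companion m u"
  have "(P * ?A) $$ (0,j) = (\<Sum>l<m. P $$ (0,l) * ?A $$ (l,j))"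
    using P j by (simp add: companion_def scalar_prod_def lessThan_atLeast0)
  also have "\<dots> = (\<Sum>l<m. if l = j+1 then P $$ (0,l) else 0)"
    using j by (intro sum.cong) (auto simp: companion_def)
  also have "\<dots> = P $$ (0, j+1)" using j by simp
  finally have 1: "(P * ?A) $$ (0,j) = P $$ (0, j+1)" .
  have "(?A * P) $$ (0,j) = (\<Sum>l<m. ?A $$ (0,l) * P $$ (l,j))"
    using P j by (simp add: companion_def scalar_prod_def lessThan_atLeast0)
  also have "\<dots> = (\<Sum>l<m. if l = m-1 then u m * P $$ (l,j) else 0)"
    using j by (intro sum.cong) (auto simp: companion_def)
  also have "\<dots> = u m * P $$ (m-1, j)" using j by simp
  finally have 2: "(?A * P) $$ (0,j) = u m * P $$ (m-1, j)" .
  show ?thesis using 1 2 c by simp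
qed

theorem mainTheorem3:
  fixes m :: nat and u x :: "nat \<Rightarrow> rat" and \<alpha> :: "nat \<Rightarrow> complex"
  assumes m2: "m \<ge> 2"
    and roots: "\<And>h. h \<in> {1..m} \<Longrightarrow>
                  (\<alpha> h) ^ m - (\<Sum>s<m. of_rat (u (m - s)) * (\<alpha> h) ^ s) = 0"
    and distinct: "inj_on \<alpha> {1..m}"
    and nonzero: "\<And>h. h \<in> {1..m} \<Longrightarrow> \<alpha> h \<noteq> 0"
  shows "\<forall>n\<ge>1. let P = mat_poly_sum m x (companion m u) ^\<^sub>m n;
                    c = 1 / ((-1) ^ (m - 1) * (\<Prod>h=1..m. \<alpha> h)) in
           (P $$ (0, m - 1) \<noteq> 0 \<longrightarrow>
              of_rat (P $$ (m - 1, m - 2) / P $$ (0, m - 1)) = c) \<and>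
           (P $$ (0, 1) \<noteq> 0 \<longrightarrow>
              of_rat (P $$ (m - 1, 0) / P $$ (0, 1)) = c)"
proof (intro allI impI)
  fix n :: nat
  have cu: "of_rat (u m) = (-1) ^ (m - 1) * (\<Prod>h=1..m. \<alpha> h)"
    using roots_prod[of m \<alpha> "\<lambda>s. of_rat (u (m - s))", OF m2 roots distinct] by simp
  define A where "A = companion m u"
  define P where "P = mat_poly_sum m x A ^\<^sub>m n"
  have A: "A \<in> carrier_mat m m" unfolding A_def by (rule companion_carrier)
  have N: "mat_poly_sum m x A \<in> carrier_mat m m" by (simp add: mat_poly_sum_def)
  have Pc: "P \<in> carrier_mat m m" unfolding P_def using N by simp
  have comm: "P * A = A * P" unfolding P_def by (rule comm_pow[OF A N poly_sum_comm[OF A]])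
  have e1: "P $$ (0, m-1) = u m * P $$ (m-1, m-2)"
    using entry_rel[OF Pc comm[unfolded A_def], of "m-2"] m2
    by (simp add: Suc_diff_Suc numeral_2_eq_2)
  have e2: "P $$ (0, 1) = u m * P $$ (m-1, 0)"
    using entry_rel[OF Pc comm[unfolded A_def], of 0] m2 by simp
  have key: "\<And>a b. a = u m * b \<Longrightarrow> a \<noteq> 0 \<Longrightarrow>
      (of_rat (b / a) :: complex) = 1 / ((-1) ^ (m - 1) * (\<Prod>h=1..m. \<alpha> h))"
  proof -
    fix a b :: rat assume ab: "a = u m * b" "a \<noteq> 0"
    have "b / a = 1 / u m" using ab by (simp add: field_simps)
    hence "(of_rat (b / a) :: complex) = 1 / of_rat (u m)" by (simp add: of_rat_divide)
    thus "(of_rat (b / a) :: complex) = 1 / ((-1) ^ (m - 1) * (\<Prod>h=1..m. \<alpha> h))"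
      by (simp only: cu)
  qed
  show "let P = mat_poly_sum m x (companion m u) ^\<^sub>m n;
                    c = 1 / ((-1) ^ (m - 1) * (\<Prod>h=1..m. \<alpha> h)) in
           (P $$ (0, m - 1) \<noteq> 0 \<longrightarrow>
              of_rat (P $$ (m - 1, m - 2) / P $$ (0, m - 1)) = c) \<and>
           (P $$ (0, 1) \<noteq> 0 \<longrightarrow>
              of_rat (P $$ (m - 1, 0) / P $$ (0, 1)) = c)"
    unfolding Let_def A_def[symmetric] P_def[symmetric]
    using key[OF e1] key[OF e2] by blast
qed

end
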